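(* Let $\mathbb{F}$ be a field, $0\neq h\in\mathbb{F}[x]$, $A=A_h$ the unital $\mathbb{F}$-algebra generated by $x,\hat y$ with $\hat yx-x\hat y=h$, and let $D$ be an $\mathbb{F}$-linear derivation of $A$. Then for all $a\in A$ and $k\geq0$: (a) $D(h)\in hA$ and $D(x)\in\pi_hA$; (b) $D(a^k)-ka^{k-1}D(a)\in hA$; (c) $D(\gcd(h,h'))\in\gcd(h,h')A$.
   Context: $\pi_h\in\mathbb{F}[x]$ is the monic polynomial equal, up to a nonzero scalar, to $h/\gcd(h,h')$. Every product of factors of $h$ is a normal element of $A$, so $hA=Ah$, $\pi_hA$ and $\gcd(h,h')A$ are two-sided ideals. *)

theory Defs
  imports "HOL-Computational_Algebra.Computational_Algebra"
begin

text \<open>Concrete model of the algebra A_h = F<x, y> / (y x - x y = h): the Ore extension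
  F[x][y; delta] with delta(f) = h * f'. An element is represented by its unique
  normal form  sum_j f_j(x) y^j, i.e. as a polynomial in y (outer poly) whose
  coefficients f_j are polynomials in x (inner poly).\<close>

definition weyl_delta :: "'a::field poly \<Rightarrow> 'a poly \<Rightarrow> 'a poly" where
  "weyl_delta h f = h * pderiv f"

text \<open>y^j * g = sum_k (j choose k) delta^k(g) y^(j-k)\<close>
definition weyl_ypow_mult :: "'a::field poly \<Rightarrow> nat \<Rightarrow> 'a poly \<Rightarrow> 'a poly poly" where
  "weyl_ypow_mult h j g =
     (\<Sum>k\<le>j. monom (smult (of_nat (j choose k)) ((weyl_delta h ^^ k) g)) (j - k))"

text \<open>Multiplication of A_h: (f y^j) * (g y^l) = f (y^j g) y^l.\<close>
definition weyl_mult :: "'a::field poly \<Rightarrow> 'a poly poly \<Rightarrow> 'a poly poly \<Rightarrow> 'a poly poly" where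
  "weyl_mult h p q =
     (\<Sum>j\<le>degree p. \<Sum>l\<le>degree q.
        smult (coeff p j) (weyl_ypow_mult h j (coeff q l)) * monom 1 l)"

definition weyl_pow :: "'a::field poly \<Rightarrow> 'a poly poly \<Rightarrow> nat \<Rightarrow> 'a poly poly" where
  "weyl_pow h a k = (weyl_mult h a ^^ k) 1"

definition weyl_x :: "'a::field poly poly" where
  "weyl_x = [:[:0, 1:]:]"

definition weyl_emb :: "'a::field poly \<Rightarrow> 'a poly poly" where
  "weyl_emb f = [:f:]"

text \<open>The right ideal f A (two-sided when f is a product of factors of h).\<close>
definition weyl_ideal :: "'a::field poly \<Rightarrow> 'a poly \<Rightarrow> 'a poly poly set" where
  "weyl_ideal h f = {weyl_mult h (weyl_emb f) b | b. True}"

definition weyl_derivation :: "'a::field poly \<Rightarrow> ('a poly poly \<Rightarrow> 'a poly poly) \<Rightarrow> bool" where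
  "weyl_derivation h D \<longleftrightarrow>
     (\<forall>p q. D (p + q) = D p + D q) \<and>
     (\<forall>c p. D (smult [:c:] p) = smult [:c:] (D p)) \<and>
     (\<forall>p q. D (weyl_mult h p q) = weyl_mult h (D p) q + weyl_mult h p (D q))"

definition pi_poly :: "'a::field_gcd poly \<Rightarrow> 'a poly" where
  "pi_poly h = normalize (h div gcd h (pderiv h))"

end

theory Submission
  imports Defs
begin


definition inH :: "'a::field poly \<Rightarrow> 'a poly poly \<Rightarrow> bool" where
  "inH h p \<longleftrightarrow> (\<exists>b. p = smult h b)"

lemma inH_0[simp]: "inH h 0" unfolding inH_def by (rule exI[of _ 0]) simp

lemma inH_add: "inH h p \<Longrightarrow> inH h q \<Longrightarrow> inH h (p + q)"
  unfolding inH_def by (metis smult_add_right)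

lemma inH_diff: "inH h p \<Longrightarrow> inH h q \<Longrightarrow> inH h (p - q)"
  unfolding inH_def by (metis smult_diff_right)

lemma inH_minus: "inH h p \<Longrightarrow> inH h (- p)"
  unfolding inH_def by (metis smult_minus_right)

lemma inH_smult: "inH h p \<Longrightarrow> inH h (smult c p)"
  unfolding inH_def by (metis smult_smult mult.commute)

lemma inH_multL: "inH h p \<Longrightarrow> inH h (q * p)"
  unfolding inH_def by (metis mult_smult_right)

lemma inH_multR: "inH h p \<Longrightarrow> inH h (p * q)"
  unfolding inH_def by (metis mult_smult_left)

lemma inH_sum: "(\<And>i. i \<in> A \<Longrightarrow> inH h (f i)) \<Longrightarrow> inH h (\<Sum>i\<in>A. f i)"
  by (induction A rule: infinite_finite_induct) (auto intro: inH_add)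

lemma inH_smult_self: "inH h (smult h b)" unfolding inH_def by blast


lemma smult_sum_right: "smult c (\<Sum>i\<in>A. f i) = (\<Sum>i\<in>A. smult c (f i))"
  by (induction A rule: infinite_finite_induct) (auto simp: smult_add_right)

lemma wm_emb: "weyl_mult h (weyl_emb f) b = smult f b"
proof -
  have "weyl_mult h (weyl_emb f) b = (\<Sum>l\<le>degree b. monom (f * coeff b l) l)"
  proof -
    have y0: "weyl_ypow_mult h 0 g = [:g:]" for g
      unfolding weyl_ypow_mult_def by (simp add: monom_0)
    have "smult f [:coeff b l:] * monom 1 l = monom (f * coeff b l) l" for l
      by (simp flip: monom_0 add: smult_monom mult_monom)
    moreover have "weyl_mult h [:f:] b = (\<Sum>l\<le>degree b. smult f (weyl_ypow_mult h 0 (coeff b l)) * monom 1 l)"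
      unfolding weyl_mult_def by simp
    ultimately show ?thesis unfolding weyl_emb_def y0 by simp
  qed
  also have "\<dots> = smult f (\<Sum>l\<le>degree b. monom (coeff b l) l)"
    by (simp add: smult_sum_right smult_monom)
  also have "\<dots> = smult f b" by (simp add: poly_as_sum_of_monoms)
  finally show ?thesis .
qed

lemma inH_iff_ideal: "weyl_ideal h f = {p. inH f p}"
  unfolding weyl_ideal_def inH_def wm_emb by blast

lemma delta_pow_Suc: "(weyl_delta h ^^ Suc k) g = h * pderiv ((weyl_delta h ^^ k) g)"
  by (simp add: weyl_delta_def)

lemma ypow_inH: "inH h (weyl_ypow_mult h j g - monom g j)"
proof (cases j)
  case 0
  then show ?thesis by (simp add: weyl_ypow_mult_def)
next
  case (Suc n)
  have "weyl_ypow_mult h j g = monom g j +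
     (\<Sum>i\<le>n. monom (smult (of_nat (j choose Suc i)) ((weyl_delta h ^^ Suc i) g)) (j - Suc i))"
    unfolding weyl_ypow_mult_def Suc sum.atMost_Suc_shift by simp
  moreover have "inH h (\<Sum>i\<le>n. monom (smult (of_nat (j choose Suc i)) ((weyl_delta h ^^ Suc i) g)) (j - Suc i))"
  proof (rule inH_sum)
    fix i
    have "monom (smult (of_nat (j choose Suc i)) ((weyl_delta h ^^ Suc i) g)) (j - Suc i)
      = smult h (monom (smult (of_nat (j choose Suc i)) (pderiv ((weyl_delta h ^^ i) g))) (j - Suc i))"
      unfolding delta_pow_Suc smult_monom by (simp add: ac_simps)
    then show "inH h (monom (smult (of_nat (j choose Suc i)) ((weyl_delta h ^^ Suc i) g)) (j - Suc i))"
      by (simp add: inH_smult_self)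
  qed
  ultimately show ?thesis by simp
qed

lemma smult_monom_mult_1: "smult (a::'a::field poly) (monom b j) * monom 1 l = monom (a * b) (j + l)"
  by (simp add: smult_monom mult_monom)

lemma mult_as_sum: "(p::'a::field poly poly) * q = (\<Sum>j\<le>degree p. \<Sum>l\<le>degree q. smult (coeff p j) (monom (coeff q l) j) * monom 1 l)"
proof -
  have "p * q = (\<Sum>j\<le>degree p. monom (coeff p j) j) * (\<Sum>l\<le>degree q. monom (coeff q l) l)"
    by (simp add: poly_as_sum_of_monoms)
  also have "\<dots> = (\<Sum>j\<le>degree p. \<Sum>l\<le>degree q. monom (coeff p j) j * monom (coeff q l) l)"
    by (simp add: sum_product)
  also have "\<dots> = (\<Sum>j\<le>degree p. \<Sum>l\<le>degree q. smult (coeff p j) (monom (coeff q l) j) * monom 1 l)"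
    by (simp only: smult_monom_mult_1 mult_monom)
  finally show ?thesis .
qed

lemma wm_inH: "inH h (weyl_mult h p q - p * q)"
proof -
  have "\<forall>j g. \<exists>s. weyl_ypow_mult h j g = monom g j + smult h s"
    using ypow_inH unfolding inH_def by (metis diff_eq_eq add.commute)
  then obtain S where S: "\<And>j g. weyl_ypow_mult h j g = monom g j + smult h (S j g)"
    by metis
  have t: "smult a (monom g j + smult h s) * m = smult a (monom g j) * m + smult h (smult a s * m)"
    for a g j s and m :: "'a poly poly"
    by (simp add: smult_add_right distrib_right mult.commute[of a h])
  have "weyl_mult h p q = p * q + smult h (\<Sum>j\<le>degree p. \<Sum>l\<le>degree q. smult (coeff p j) (S j (coeff q l)) * monom 1 l)"
    unfolding weyl_mult_def S t mult_as_sum[of p q] sum.distrib smult_sum_right ..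
  then show ?thesis by (simp add: inH_smult_self)
qed

lemma comm_inH: "inH h (weyl_mult h a b - weyl_mult h b a)"
proof -
  have "weyl_mult h a b - weyl_mult h b a = (weyl_mult h a b - a * b) - (weyl_mult h b a - b * a)"
    by (simp add: mult.commute)
  then show ?thesis using wm_inH inH_diff by metis
qed

lemma yx: "weyl_mult h [:0, 1:] weyl_x - weyl_mult h weyl_x [:0, 1:] = weyl_emb h"
proof -
  have a: "weyl_mult h weyl_x [:0, 1:] = monom [:0,1:] 1"
    unfolding weyl_x_def weyl_emb_def[symmetric] wm_emb by (simp add: monom_Suc weyl_emb_def monom_0)
  have b: "weyl_mult h [:0, 1:] weyl_x = monom [:0,1:] 1 + [:h:]"
    unfolding weyl_mult_def weyl_x_def weyl_ypow_mult_def weyl_delta_def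
    by (simp add: monom_Suc monom_0 pderiv_pCons)
  show ?thesis unfolding a b weyl_emb_def by simp
qed

lemma D_add: "weyl_derivation h D \<Longrightarrow> D (p + q) = D p + D q"
  unfolding weyl_derivation_def by blast

lemma D_mult: "weyl_derivation h D \<Longrightarrow> D (weyl_mult h p q) = weyl_mult h (D p) q + weyl_mult h p (D q)"
  unfolding weyl_derivation_def by blast

lemma D_smult: "weyl_derivation h D \<Longrightarrow> D (smult [:c:] p) = smult [:c:] (D p)"
  unfolding weyl_derivation_def by blast

lemma D_diff: "weyl_derivation h D \<Longrightarrow> D (p - q) = D p - D q"
  using D_add[of h D "p - q" q] by (simp add: algebra_simps)

lemma D_0: "weyl_derivation h D \<Longrightarrow> D 0 = 0"
  using D_diff[of h D 0 0] by simp

lemma wm_1_left: "weyl_mult h 1 q = q"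
proof -
  have "(1::'a::field poly poly) = weyl_emb 1" by (simp add: weyl_emb_def)
  then show ?thesis using wm_emb[of h 1 q] by simp
qed

lemma D_1: "weyl_derivation h D \<Longrightarrow> inH h (D 1)"
proof -
  assume d: "weyl_derivation h D"
  have "D 1 = weyl_mult h (D 1) 1 + D 1"
    using D_mult[OF d, of 1 1] by (simp add: wm_1_left)
  then have "weyl_mult h (D 1) 1 = 0" by simp
  then have "D 1 = - (weyl_mult h (D 1) 1 - D 1 * 1)" by simp
  then show ?thesis using wm_inH inH_minus by metis
qed

lemma X_mult: "[:0, 1:] * (f::'a::field poly) = pCons 0 f" by simp

lemma pCons_emb: "weyl_emb (pCons c f) = smult [:c:] 1 + weyl_mult h weyl_x (weyl_emb f)"
proof -
  have "pCons c f = [:c:] + [:0, 1:] * f"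
    by simp
  then show ?thesis
    unfolding weyl_x_def weyl_emb_def[symmetric] wm_emb by (simp add: weyl_emb_def)
qed

lemma deriv_poly:
  assumes d: "weyl_derivation h D"
  shows "inH h (D (weyl_emb f) - smult (pderiv f) (D weyl_x))"
proof (induction f)
  case 0
  then show ?case using D_0[OF d] by (simp add: weyl_emb_def)
next
  case (pCons c f)
  let ?x = "D weyl_x" and ?e = "D (weyl_emb f)"
  have "D (weyl_emb (pCons c f)) = smult [:c:] (D 1) + (weyl_mult h ?x (weyl_emb f) + weyl_mult h weyl_x ?e)"
    unfolding pCons_emb[of c f h] D_add[OF d] D_smult[OF d] D_mult[OF d] ..
  also have "weyl_mult h weyl_x ?e = smult [:0,1:] ?e"
    unfolding weyl_x_def weyl_emb_def[symmetric] wm_emb ..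
  finally have eq: "D (weyl_emb (pCons c f)) - smult (pderiv (pCons c f)) ?x =
     smult [:c:] (D 1) + (weyl_mult h ?x (weyl_emb f) - ?x * weyl_emb f)
     + smult [:0,1:] (?e - smult (pderiv f) ?x)"
    by (simp add: pderiv_pCons smult_add_left smult_diff_right weyl_emb_def X_mult
         algebra_simps)
  show ?case unfolding eq
    by (intro inH_add inH_smult pCons D_1 d wm_inH)
qed

lemma wp_Suc: "weyl_pow h a (Suc k) = weyl_mult h a (weyl_pow h a k)"
  by (simp add: weyl_pow_def)

lemma wp_0: "weyl_pow h a 0 = 1"
  by (simp add: weyl_pow_def)

lemma wp_inH: "inH h (weyl_pow h a k - a ^ k)"
proof (induction k)
  case 0
  then show ?case by (simp add: wp_0)
next
  case (Suc k)
  have "weyl_pow h a (Suc k) - a ^ Suc k =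
     (weyl_mult h a (weyl_pow h a k) - a * weyl_pow h a k) + a * (weyl_pow h a k - a ^ k)"
    by (simp add: wp_Suc algebra_simps)
  then show ?case using Suc wm_inH inH_add inH_multL by metis
qed

lemma powQ:
  assumes d: "weyl_derivation h D"
  shows "inH h (D (weyl_pow h a k) - smult (of_nat k) (a ^ (k - 1) * D a))"
proof (induction k)
  case 0
  then show ?case using D_1[OF d] by (simp add: wp_0)
next
  case (Suc k)
  let ?w = "weyl_pow h a k"
  have e: "smult (of_nat k) (a * (a ^ (k - 1) * D a)) = smult (of_nat k) (a ^ k * D a)"
    by (cases k) (simp_all add: mult.assoc)
  have "D (weyl_pow h a (Suc k)) - smult (of_nat (Suc k)) (a ^ (Suc k - 1) * D a) =
     (weyl_mult h (D a) ?w - D a * ?w) + D a * (?w - a ^ k)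
     + (weyl_mult h a (D ?w) - a * D ?w)
     + a * (D ?w - smult (of_nat k) (a ^ (k - 1) * D a))
     + (smult (of_nat k) (a * (a ^ (k - 1) * D a)) - smult (of_nat k) (a ^ k * D a))"
    unfolding wp_Suc D_mult[OF d]
    by (simp add: algebra_simps smult_add_left of_nat_Suc)
  then show ?case unfolding e
    by (metis inH_add inH_multL wm_inH wp_inH Suc diff_self inH_0)
qed

lemma powP:
  assumes d: "weyl_derivation h D"
  shows "inH h (D (weyl_pow h a k) - smult (of_nat k) (weyl_mult h (weyl_pow h a (k - 1)) (D a)))"
proof -
  let ?w = "weyl_pow h a (k - 1)"
  have "D (weyl_pow h a k) - smult (of_nat k) (weyl_mult h ?w (D a)) =
    (D (weyl_pow h a k) - smult (of_nat k) (a ^ (k - 1) * D a))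
    - smult (of_nat k) ((weyl_mult h ?w (D a) - ?w * D a) + (?w - a ^ (k - 1)) * D a)"
    by (simp add: algebra_simps smult_add_right smult_diff_right)
  then show ?thesis
    by (metis powQ[OF d] inH_diff inH_smult inH_add inH_multR wm_inH wp_inH)
qed

lemma pi_dvd:
  assumes h: "(h::'a::field_gcd poly) \<noteq> 0" and e: "pderiv h * c = h * d"
  shows "pi_poly h dvd c"
proof -
  let ?g = "gcd h (pderiv h)"
  have g0: "?g \<noteq> 0" using h by simp
  define h1 where "h1 = h div ?g"
  define h2 where "h2 = pderiv h div ?g"
  have hh: "h = h1 * ?g" unfolding h1_def by simp
  have hh': "pderiv h = h2 * ?g" unfolding h2_def by simp
  have cop: "coprime h1 h2" unfolding h1_def h2_def using h by (intro div_gcd_coprime) simp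
  from e have "?g * (h2 * c) = ?g * (h1 * d)"
    by (subst (asm) hh', subst (asm) hh) (simp add: ac_simps)
  then have "h2 * c = h1 * d" using g0 by simp
  then have "h1 dvd h2 * c" by (metis dvd_triv_left)
  then have "h1 dvd c" using cop by (simp add: coprime_dvd_mult_right_iff)
  then show ?thesis unfolding pi_poly_def h1_def by simp
qed

lemma all_dvd_smult:
  assumes "\<And>i. (f::'a::field_gcd poly) dvd coeff p i"
  shows "\<exists>b. p = smult f b"
proof
  show "p = smult f (map_poly (\<lambda>c. c div f) p)"
    by (rule poly_eqI) (simp add: coeff_map_poly assms)
qed

lemma g_dvd:
  fixes h :: "'a::field_gcd poly"
  shows "gcd h (pderiv h) dvd pderiv (gcd h (pderiv h)) * pi_poly h"
proof -
  let ?g = "gcd h (pderiv h)"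
  define h1 where "h1 = h div ?g"
  have hh: "h = h1 * ?g" unfolding h1_def by simp
  have "pderiv h = h1 * pderiv ?g + ?g * pderiv h1"
    by (subst hh) (simp add: pderiv_mult)
  then have "?g dvd h1 * pderiv ?g"
    by (metis dvd_add_right_iff dvd_triv_left gcd_dvd2 add.commute)
  also have "h1 * pderiv ?g dvd pderiv ?g * pi_poly h"
    unfolding pi_poly_def h1_def[symmetric] by (simp add: mult.commute mult_dvd_mono)
  finally show ?thesis .
qed

theorem lemma5p5:
  fixes h :: "'a::field_gcd poly"
    and D :: "'a poly poly \<Rightarrow> 'a poly poly"
  assumes "h \<noteq> 0"
    and "weyl_derivation h D"
  shows "D (weyl_emb h) \<in> weyl_ideal h h
       \<and> D weyl_x \<in> weyl_ideal h (pi_poly h)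
       \<and> (\<forall>a k. D (weyl_pow h a k)
               - smult (of_nat k) (weyl_mult h (weyl_pow h a (k - 1)) (D a))
             \<in> weyl_ideal h h)
       \<and> D (weyl_emb (gcd h (pderiv h))) \<in> weyl_ideal h (gcd h (pderiv h))"
proof -
  note d = assms(2)
  let ?y = "[:0, 1:] :: 'a poly poly"
  have a1: "inH h (D (weyl_emb h))"
  proof -
    have "D (weyl_emb h) = (weyl_mult h (D ?y) weyl_x - weyl_mult h weyl_x (D ?y))
       + (weyl_mult h ?y (D weyl_x) - weyl_mult h (D weyl_x) ?y)"
      unfolding yx[symmetric] D_diff[OF d] D_mult[OF d] by (simp add: algebra_simps)
    then show ?thesis by (metis comm_inH inH_add)
  qed
  have "inH h (smult (pderiv h) (D weyl_x))"
    using inH_diff[OF a1 deriv_poly[OF d, of h]] by simp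
  then obtain b where b: "smult (pderiv h) (D weyl_x) = smult h b" unfolding inH_def by blast
  have "pi_poly h dvd coeff (D weyl_x) i" for i
  proof (rule pi_dvd[OF assms(1)])
    show "pderiv h * coeff (D weyl_x) i = h * coeff b i"
      using arg_cong[OF b, of "\<lambda>p. coeff p i"] by simp
  qed
  then obtain c where c: "D weyl_x = smult (pi_poly h) c" using all_dvd_smult by metis
  have a2: "inH (pi_poly h) (D weyl_x)" unfolding inH_def c by blast
  let ?g = "gcd h (pderiv h)"
  have a4: "inH ?g (D (weyl_emb ?g))"
  proof -
    obtain r where r: "D (weyl_emb ?g) - smult (pderiv ?g) (D weyl_x) = smult h r"
      using deriv_poly[OF d, of ?g] unfolding inH_def by blast
    obtain q where q: "pderiv ?g * pi_poly h = ?g * q" using g_dvd[of h] by (auto elim: dvdE)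
    have hh: "h = ?g * (h div ?g)" by simp
    have "D (weyl_emb ?g) = smult ?g (smult (h div ?g) r + smult q c)"
    proof -
      have "D (weyl_emb ?g) = smult h r + smult (pderiv ?g * pi_poly h) c"
        using r unfolding c by (simp add: algebra_simps)
      also have "\<dots> = smult ?g (smult (h div ?g) r + smult q c)"
        unfolding q by (subst hh) (simp add: smult_add_right)
      finally show ?thesis .
    qed
    then show ?thesis unfolding inH_def by blast
  qed
  show ?thesis
    unfolding inH_iff_ideal using a1 a2 a4 powP[OF d] by blast
qed

end
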